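(* Let $I\subseteq\mathbb{R}$ be an interval. If $(p_\lambda)_{\lambda\in I}$ and $(q_\lambda)_{\lambda\in I}$ are increasing nets of projections in an abelian $AW^*$-algebra, then $$\bigwedge_{\lambda\in I}(p_\lambda\vee q_\lambda)=\Big(\bigwedge_{\lambda\in I}p_\lambda\Big)\vee\Big(\bigwedge_{\mu\in I}q_\mu\Big).$$
   Context: An $AW^*$-algebra is a C*-algebra $\mathcal{M}$ such that for every nonempty $S\subseteq\mathcal{M}$ there is a projection $p$ with $\{x\in\mathcal{M}: sx=0\ \forall s\in S\}=p\mathcal{M}$; its projections form a complete lattice under the Löwner order, with lattice operations $\vee,\wedge$. A net $(p_\lambda)_{\lambda\in I}$ is increasing if $p_\lambda\le p_\mu$ whenever $\lambda\le\mu$. *)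

theory Defs
  imports "HOL-Analysis.Analysis"
begin

text \<open>A complex C*-algebra is modelled on a type 'a carrying a real Banach algebra
structure (type classes), together with an explicit complex scalar multiplication
sc and an involution st, subject to the usual axioms.\<close>

definition cstar_algebra ::
  "(complex \<Rightarrow> 'a::{real_normed_algebra,banach} \<Rightarrow> 'a) \<Rightarrow> ('a \<Rightarrow> 'a) \<Rightarrow> bool" where
  "cstar_algebra sc st \<longleftrightarrow>
     (\<forall>r x. sc (complex_of_real r) x = r *\<^sub>R x) \<and>
     (\<forall>c d x. sc (c + d) x = sc c x + sc d x) \<and>
     (\<forall>c x y. sc c (x + y) = sc c x + sc c y) \<and>
     (\<forall>c d x. sc (c * d) x = sc c (sc d x)) \<and>
     (\<forall>c x y. sc c (x * y) = sc c x * y \<and> sc c (x * y) = x * sc c y) \<and>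
     (\<forall>c x. norm (sc c x) = cmod c * norm x) \<and>
     (\<forall>x. st (st x) = x) \<and>
     (\<forall>x y. st (x + y) = st x + st y) \<and>
     (\<forall>c x. st (sc c x) = sc (cnj c) (st x)) \<and>
     (\<forall>x y. st (x * y) = st y * st x) \<and>
     (\<forall>x. norm (st x * x) = (norm x)\<^sup>2)"

definition is_projection :: "('a::{real_normed_algebra} \<Rightarrow> 'a) \<Rightarrow> 'a \<Rightarrow> bool" where
  "is_projection st p \<longleftrightarrow> st p = p \<and> p * p = p"

definition aw_star_algebra ::
  "(complex \<Rightarrow> 'a::{real_normed_algebra,banach} \<Rightarrow> 'a) \<Rightarrow> ('a \<Rightarrow> 'a) \<Rightarrow> bool" where
  "aw_star_algebra sc st \<longleftrightarrow> cstar_algebra sc st \<and>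
     (\<forall>S::'a set. S \<noteq> {} \<longrightarrow>
        (\<exists>p. is_projection st p \<and> {x. \<forall>s\<in>S. s * x = 0} = {p * y | y. True}))"

definition abelian_aw_star_algebra ::
  "(complex \<Rightarrow> 'a::{real_normed_algebra,banach} \<Rightarrow> 'a) \<Rightarrow> ('a \<Rightarrow> 'a) \<Rightarrow> bool" where
  "abelian_aw_star_algebra sc st \<longleftrightarrow> aw_star_algebra sc st \<and> (\<forall>x y::'a. x * y = y * x)"

definition loewner_le :: "('a::{real_normed_algebra} \<Rightarrow> 'a) \<Rightarrow> 'a \<Rightarrow> 'a \<Rightarrow> bool" where
  "loewner_le st a b \<longleftrightarrow> (\<exists>y. b - a = st y * y)"

definition is_proj_glb :: "('a::{real_normed_algebra} \<Rightarrow> 'a) \<Rightarrow> 'a set \<Rightarrow> 'a \<Rightarrow> bool" where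
  "is_proj_glb st S p \<longleftrightarrow> is_projection st p \<and> (\<forall>s\<in>S. loewner_le st p s) \<and>
     (\<forall>r. is_projection st r \<and> (\<forall>s\<in>S. loewner_le st r s) \<longrightarrow> loewner_le st r p)"

definition is_proj_lub :: "('a::{real_normed_algebra} \<Rightarrow> 'a) \<Rightarrow> 'a set \<Rightarrow> 'a \<Rightarrow> bool" where
  "is_proj_lub st S p \<longleftrightarrow> is_projection st p \<and> (\<forall>s\<in>S. loewner_le st s p) \<and>
     (\<forall>r. is_projection st r \<and> (\<forall>s\<in>S. loewner_le st s r) \<longrightarrow> loewner_le st p r)"

definition proj_Inf :: "('a::{real_normed_algebra} \<Rightarrow> 'a) \<Rightarrow> 'a set \<Rightarrow> 'a" where
  "proj_Inf st S = (THE p. is_proj_glb st S p)"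

definition proj_sup :: "('a::{real_normed_algebra} \<Rightarrow> 'a) \<Rightarrow> 'a \<Rightarrow> 'a \<Rightarrow> 'a" where
  "proj_sup st p q = (THE r. is_proj_lub st {p, q} r)"

end

theory Submission
  imports Defs
begin

locale acs =
  fixes sc :: "complex \<Rightarrow> 'a::{real_normed_algebra,banach} \<Rightarrow> 'a" and st :: "'a \<Rightarrow> 'a"
  assumes ab: "abelian_aw_star_algebra sc st"
begin

lemma cs: "cstar_algebra sc st" using ab unfolding abelian_aw_star_algebra_def aw_star_algebra_def by auto
lemma comm: "(x::'a) * y = y * x" using ab unfolding abelian_aw_star_algebra_def by blast
lemma lcomm: "(x::'a) * (y * z) = y * (x * z)" by (metis comm mult.assoc)
lemma st_st[simp]: "st (st x) = x" using cs unfolding cstar_algebra_def by auto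
lemma st_add[simp]: "st (x + y) = st x + st y" using cs unfolding cstar_algebra_def by auto
lemma st_mult[simp]: "st (x * y) = st y * st x" using cs unfolding cstar_algebra_def by auto
lemma st_sc[simp]: "st (sc c x) = sc (cnj c) (st x)" using cs unfolding cstar_algebra_def by auto
lemma cstar: "norm (st x * x) = (norm x)^2" using cs unfolding cstar_algebra_def by auto
lemma sc_real: "sc (complex_of_real r) x = r *\<^sub>R x" using cs unfolding cstar_algebra_def by auto
lemma sc_addc: "sc (c + d) x = sc c x + sc d x" using cs unfolding cstar_algebra_def by auto
lemma sc_multc: "sc (c * d) x = sc c (sc d x)" using cs unfolding cstar_algebra_def by auto
lemma sc_ml: "sc c x * y = sc c (x * y)" using cs unfolding cstar_algebra_def by metis
lemma sc_mr: "x * sc c y = sc c (x * y)" using cs unfolding cstar_algebra_def by metis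
lemma sc_add: "sc c (x + y) = sc c x + sc c y" using cs unfolding cstar_algebra_def by auto

lemma st_0[simp]: "st 0 = 0"
  by (metis add_cancel_right_right st_add)
lemma st_minus[simp]: "st (- x) = - st x"
  by (metis add_eq_0_iff st_0 st_add add.right_inverse)
lemma st_diff[simp]: "st (x - y) = st x - st y"
  by (metis diff_conv_add_uminus st_add st_minus)
lemma st_scaleR[simp]: "st (r *\<^sub>R x) = r *\<^sub>R st x"
  by (metis sc_real st_sc complex_cnj_complex_of_real)
lemma norm_st[simp]: "norm (st x) = norm x"
proof -
  have "(norm (st x))^2 = (norm x)^2"
    using cstar[of "st x"] cstar[of x] by (simp add: comm)
  thus ?thesis by (simp add: power2_eq_iff_nonneg)
qed
lemma sc_mm: "sc c x * sc d y = sc (c * d) (x * y)"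
proof -
  have "sc c x * sc d y = sc c (x * sc d y)" by (rule sc_ml)
  also have "\<dots> = sc c (sc d (x*y))" by (simp only: sc_mr)
  also have "\<dots> = sc (c*d) (x*y)" by (simp only: sc_multc)
  finally show ?thesis .
qed

lemma sc_one[simp]: "sc 1 x = x" using sc_real[of 1 x] by simp
lemma sc_zero[simp]: "sc 0 x = 0" using sc_real[of 0 x] by simp

lemma sc_inv: "sc (- \<i>) (sc \<i> w) = w"
  by (metis sc_multc sc_one complex_i_mult_minus mult_minus_left minus_minus)

lemma SA:
  assumes "st b = b" "st h = h"
  shows "(norm b)^2 \<le> norm (b * b + h * h)"
proof -
  define z where "z = b + sc \<i> h"
  have sz: "st z = b + sc (- \<i>) h" using assms by (simp add: z_def)
  have "st z * z = b * b + (sc \<i> (b * h) + sc (- \<i>) (b * h)) + sc (- \<i>) (sc \<i> (h * h))"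
    unfolding sz z_def by (simp add: algebra_simps sc_ml sc_mr comm assms)
  also have "sc \<i> (b * h) + sc (- \<i>) (b * h) = 0" using sc_addc[of "\<i>" "-\<i>" "b*h"] by simp
  finally have e: "st z * z = b * b + h * h" by (simp add: sc_inv)
  have c0: "sc \<i> h + sc (- \<i>) h = 0" using sc_addc[of "\<i>" "-\<i>" h] by simp
  have "z + st z = 2 *\<^sub>R b" unfolding sz z_def using c0
    by (simp add: scaleR_2 algebra_simps assms)
  hence "b = (1/2) *\<^sub>R (z + st z)" by simp
  hence "norm b = (1/2) * norm (z + st z)" by simp
  also have "\<dots> \<le> (1/2) * (norm z + norm (st z))" using norm_triangle_ineq[of z "st z"] by simp
  finally have "norm b \<le> norm z" by simp
  hence "(norm b)^2 \<le> (norm z)^2" by (simp add: power_mono)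
  also have "\<dots> = norm (b * b + h * h)" using cstar[of z] e by simp
  finally show ?thesis .
qed


lemma sc_neg: "sc (- c) x = - sc c x"
  using sc_addc[of c "-c" x] by (simp add: add_eq_0_iff)
lemma sc_diff: "sc c (x - y) = sc c x - sc c y"
  by (metis add_diff_cancel diff_add_cancel sc_add)
lemma sc_norm: "norm (sc c x) = cmod c * norm x" using cs unfolding cstar_algebra_def by auto

lemma decomp:
  assumes "v * g = v" "st g = g"
  obtains h k where "st h = h" "st k = k" "h*h + k*k = st v * v" "norm h \<le> norm v" "norm k \<le> norm v"
    "h * g = h" "k * g = k"
proof -
  define h where "h = (1/2) *\<^sub>R (v + st v)"
  define w where "w = v - st v"
  define k where "k = sc (- (\<i>/2)) w"
  have sth: "st h = h" unfolding h_def by (simp add: add.commute)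
  have "st k = sc (\<i>/2) (st v - v)" unfolding k_def w_def by simp
  also have "\<dots> = k" unfolding k_def w_def
    by (metis minus_diff_eq sc_diff sc_neg diff_self minus_minus)
  finally have stk: "st k = k" .
  have cc: "(- (\<i>/2)) * (- (\<i>/2)) = complex_of_real (-1/4)"
    by (simp add: complex_eq_iff)
  have "k * k = sc (complex_of_real (-1/4)) (w * w)" unfolding k_def
    by (simp only: sc_mm cc)
  hence kk: "k * k = (-1/4) *\<^sub>R (w * w)" by (simp only: sc_real)
  have "h * h + k * k = st v * v" unfolding kk unfolding h_def w_def
    by (simp add: algebra_simps comm lcomm scaleR_2) (simp flip: scaleR_add_left)
  moreover have "norm h \<le> norm v"
  proof -
    have "norm h = (1/2) * norm (v + st v)" unfolding h_def by simp
    also have "\<dots> \<le> (1/2) * (norm v + norm (st v))" using norm_triangle_ineq[of v "st v"] by simp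
    finally show ?thesis by simp
  qed
  moreover have "norm k \<le> norm v"
  proof -
    have "norm k = (1/2) * norm w" unfolding k_def by (simp add: sc_norm)
    also have "\<dots> \<le> (1/2) * (norm v + norm (st v))" unfolding w_def using norm_triangle_ineq4[of v "st v"] by simp
    finally show ?thesis by simp
  qed
  moreover have svg: "st v * g = st v"
    by (metis assms st_mult comm)
  have "h * g = h" unfolding h_def using assms svg by (simp add: algebra_simps)
  moreover have "k * g = k" unfolding k_def w_def using assms svg by (simp add: sc_ml algebra_simps)
  ultimately show ?thesis using that sth stk by blast
qed

lemma fixp:
  assumes "st a = a" "a * g = a" "norm g \<le> 1" "g * g = g" "norm a \<le> 2*\<rho> - \<rho>^2" "0 < \<rho>" "\<rho> < 1"
  shows "\<exists>c. st c = c \<and> c * g = c \<and> c + c = a + c * c"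
proof -
  define T where "T c = (1/2) *\<^sub>R (a + c * c)" for c
  define S where "S = cball (0::'a) \<rho>"
  have "complete S" unfolding S_def by (simp add: complete_eq_closed)
  moreover have "S \<noteq> {}" unfolding S_def using assms by simp
  moreover have "T ` S \<subseteq> S"
  proof
    fix y assume "y \<in> T ` S"
    then obtain x where x: "norm x \<le> \<rho>" "y = T x" unfolding S_def by auto
    have "norm (x * x) \<le> \<rho>^2"
      by (metis x(1) norm_mult_ineq norm_ge_zero mult_mono power2_eq_square order_trans)
    hence "norm (a + x * x) \<le> 2 * \<rho>" using norm_triangle_ineq[of a "x*x"] assms by linarith
    thus "y \<in> S" unfolding S_def x T_def by simp
  qed
  moreover have "dist (T x) (T y) \<le> \<rho> * dist x y" if "x \<in> S" "y \<in> S" for x y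
  proof -
    have "T x - T y = (1/2) *\<^sub>R ((x - y) * (x + y))" unfolding T_def by (simp add: algebra_simps comm)
    hence "dist (T x) (T y) = (1/2) * norm ((x - y) * (x + y))" by (simp add: dist_norm)
    also have "\<dots> \<le> (1/2) * (norm (x - y) * norm (x + y))" by (simp add: norm_mult_ineq)
    also have "norm (x + y) \<le> 2 * \<rho>" using that norm_triangle_ineq[of x y] unfolding S_def by simp
    hence "norm (x - y) * norm (x + y) \<le> norm (x - y) * (2 * \<rho>)"
      by (rule mult_left_mono) simp
    hence "(1/2) * (norm (x - y) * norm (x + y)) \<le> (1/2) * (norm (x - y) * (2 * \<rho>))"
      by simp
    finally show ?thesis by (simp add: dist_norm mult.commute)
  qed
  ultimately have "\<exists>!x\<in>S. T x = x" using Banach_fix[of S \<rho> T] assms by auto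
  then obtain c where c: "c \<in> S" "T c = c" and un: "\<And>x. x \<in> S \<Longrightarrow> T x = x \<Longrightarrow> x = c" by blast
  have "T (st c) = st c"
  proof -
    have "T (st c) = st (T c)" unfolding T_def using assms(1) by simp
    thus ?thesis using c by simp
  qed
  moreover have "st c \<in> S" using c unfolding S_def by simp
  ultimately have 1: "st c = c" using un by blast
  have "T (c * g) = T c * g" unfolding T_def using assms(2,4) by (simp add: algebra_simps comm lcomm)
  hence "T (c * g) = c * g" using c by simp
  moreover have "c * g \<in> S" using c assms(3) unfolding S_def
    by (simp add: norm_mult_ineq) (metis norm_mult_ineq mult_mono norm_ge_zero mult_1_right order_trans)
  ultimately have 2: "c * g = c" using un by blast
  have "c + c = a + c * c" using c(2) unfolding T_def by (metis scaleR_2 scaleR_left_commute scaleR_one  field_sum_of_halves scaleR_add_left)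
  thus ?thesis using 1 2 by blast
qed


lemma proj_norm: assumes "st g = g" "g * g = g" shows "norm g \<le> 1"
proof -
  have "(norm g)^2 = norm g" using cstar[of g] assms by simp
  hence "norm g = 0 \<or> norm g = 1" by (simp add: power2_eq_square)
  thus ?thesis by auto
qed

lemma pos0:
  assumes g: "st g = g" "g * g = g" and v: "st v * v = - g" "v * g = v"
  shows "g = 0"
proof -
  have ng: "norm g \<le> 1" using proj_norm g by blast
  have "(norm v)^2 \<le> 1" using cstar[of v] v ng by simp
  hence nv: "norm v \<le> 1" by (simp add: power_le_one_iff)
  obtain h k where hk: "st h = h" "st k = k" "h*h + k*k = st v * v" "norm h \<le> norm v" "norm k \<le> norm v"
    "h * g = h" "k * g = k" using decomp[OF v(2) g(1)] by blast
  have nk: "norm k \<le> 1" using hk nv by linarith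
  have nkk: "norm (k * k) \<le> 1"
    by (metis nk norm_mult_ineq norm_ge_zero mult_le_one order_trans)
  have bound: "norm (g + k * k) \<le> 2 * (1 - \<rho>)^2" if r: "0 < \<rho>" "\<rho> < 1" for \<rho>
  proof -
    define t where "t = 2 * \<rho> - \<rho>^2"
    have q1: "0 \<le> (1 - \<rho>)^2" by simp
    have q2: "0 \<le> \<rho> * (2 - \<rho>)" using r by simp
    have t01: "0 \<le> t" "t \<le> 1" "1 - t = (1 - \<rho>)^2" unfolding t_def using q1 q2
      by (simp_all add: power2_eq_square algebra_simps)
    define a where "a = - (t *\<^sub>R (k * k))"
    have sa: "st a = a" unfolding a_def using hk by simp
    have ag: "a * g = a" unfolding a_def using hk by (simp add: mult.assoc)
    have na: "norm a \<le> 2 * \<rho> - \<rho>^2" unfolding a_def t_def[symmetric]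
      using nkk t01 by (simp add: mult_le_one) (metis mult_left_le mult.commute)
    obtain c where c: "st c = c" "c * g = c" "c + c = a + c * c"
      using fixp[OF sa ag ng g(2) na r] by blast
    define b where "b = g - c"
    have sb: "st b = b" unfolding b_def using g c by simp
    have gc: "g * c = c" using c comm by metis
    have "b * b = g * g - g * c - c * g + c * c" unfolding b_def by (simp add: algebra_simps)
    also have "\<dots> = g - (c + c) + c * c" using g gc c by (simp add: algebra_simps)
    also have "\<dots> = g - a" using c by simp
    finally have bb: "b * b = g + t *\<^sub>R (k * k)" unfolding a_def by simp
    define h' where "h' = sqrt t *\<^sub>R h"
    have sh': "st h' = h'" unfolding h'_def using hk by simp
    have "h' * h' = t *\<^sub>R (h * h)" unfolding h'_def using t01 by simp
    hence "b * b + h' * h' = g + t *\<^sub>R (h * h + k * k)" using bb by (simp add: algebra_simps)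
    also have "\<dots> = (1 - t) *\<^sub>R g" using hk v by (simp add: algebra_simps)
    finally have "(norm b)^2 \<le> norm ((1 - t) *\<^sub>R g)" using SA[OF sb sh'] by simp
    also have "\<dots> \<le> 1 - t" using t01 ng by (simp add: mult_left_le)
    finally have nb: "norm (b * b) \<le> 1 - t"
      by (metis norm_mult_ineq power2_eq_square order_trans)
    have "g + k * k = b * b + (1 - t) *\<^sub>R (k * k)" using bb by (simp add: algebra_simps)
    hence "norm (g + k * k) \<le> norm (b * b) + norm ((1 - t) *\<^sub>R (k * k))"
      by (metis norm_triangle_ineq)
    also have "norm ((1 - t) *\<^sub>R (k * k)) \<le> 1 - t" using t01 nkk by (simp add: mult_left_le)
    finally show ?thesis using nb t01 by linarith
  qed
  have "norm (g + k * k) = 0"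
  proof (rule ccontr)
    assume "norm (g + k * k) \<noteq> 0"
    hence N: "norm (g + k * k) > 0" by simp
    define d where "d = min (1/2) (norm (g + k * k) / 4)"
    have d: "0 < d" "d \<le> 1/2" "d \<le> norm (g + k * k) / 4" unfolding d_def using N by auto
    have "norm (g + k * k) \<le> 2 * (1 - (1 - d))^2" using bound[of "1 - d"] d by simp
    also have "\<dots> = 2 * d * d" by (simp add: power2_eq_square)
    also have "\<dots> \<le> d" using d by (simp add: mult_le_one)
    finally show False using d N by linarith
  qed
  hence "g * g + k * k = 0" using g by simp
  hence "(norm g)^2 \<le> 0" using SA[OF g(1) hk(2)] by simp
  thus ?thesis by simp
qed


lemma st_proj: "is_projection st p \<Longrightarrow> st p = p" by (simp add: is_projection_def)
lemma idem_proj: "is_projection st p \<Longrightarrow> p * p = p" by (simp add: is_projection_def)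

lemma proj_mult: assumes "is_projection st p" "is_projection st q" shows "is_projection st (p * q)"
proof -
  have "p * q * (p * q) = p * p * (q * q)" by (metis comm lcomm mult.assoc)
  thus ?thesis using assms unfolding is_projection_def by (simp add: comm)
qed

lemma le_proj:
  assumes p: "is_projection st p" and q: "is_projection st q"
  shows "loewner_le st p q \<longleftrightarrow> p * q = p"
proof
  assume "p * q = p"
  hence qp: "q * p = p" using comm by metis
  have "st (q - p) * (q - p) = q * q - q * p - p * q + p * p"
    using p q by (simp add: st_proj algebra_simps)
  also have "\<dots> = q - p" using p q qp \<open>p * q = p\<close> by (simp add: idem_proj)
  finally show "loewner_le st p q" unfolding loewner_le_def by metis
next
  assume "loewner_le st p q"
  then obtain y where y: "q - p = st y * y" unfolding loewner_le_def by blast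
  have sp: "st p = p" and pp: "p * p = p" and sq: "st q = q" and qq: "q * q = q"
    using p q by (auto simp: is_projection_def)
  define g where "g = p - p * q"
  have sg: "st g = g" unfolding g_def using sp sq by (simp add: comm)
  have gq: "g * q = 0" unfolding g_def by (simp add: algebra_simps mult.assoc qq)
  have ppq: "p * (p * q) = p * q" by (simp add: mult.assoc[symmetric] pp)
  have gp: "g * p = g" unfolding g_def by (simp add: algebra_simps pp comm lcomm ppq)
  have "g * p - g * p * q = g * (p - p * q)" by (simp add: right_diff_distrib mult.assoc)
  hence "g * g = g * p - g * p * q" by (simp add: g_def[symmetric])
  hence gg: "g * g = g" using gp gq by simp
  define w where "w = y * g"
  have "st w * w = g * (st y * y) * g" unfolding w_def using sg by (simp add: mult.assoc)
  also have "\<dots> = - g" unfolding y[symmetric] by (simp add: algebra_simps gq gp gg)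
  finally have "st w * w = - g" .
  moreover have "w * g = w" unfolding w_def by (simp add: mult.assoc gg)
  ultimately have "g = 0" using pos0[OF sg gg] by blast
  thus "p * q = p" unfolding g_def by simp
qed

lemma unit_ex: obtains e where "is_projection st e" "\<And>x. e * x = x"
proof -
  have "aw_star_algebra sc st" using ab unfolding abelian_aw_star_algebra_def by blast
  then obtain e where e: "is_projection st e" "{x. \<forall>s\<in>{0::'a}. s * x = 0} = {e * y | y. True}"
    unfolding aw_star_algebra_def by blast
  have "e * x = x" for x
  proof -
    have "x \<in> {e * y | y. True}" using e(2) by auto
    then obtain y where "x = e * y" by blast
    thus ?thesis using idem_proj[OF e(1)] by (simp add: mult.assoc[symmetric])
  qed
  thus ?thesis using that e(1) by blast
qed


lemma inf_ex:
  assumes S: "\<forall>s\<in>S. is_projection st s"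
  obtains m where "is_projection st m" "\<forall>s\<in>S. m * s = m"
    "\<forall>r. is_projection st r \<and> (\<forall>s\<in>S. r * s = r) \<longrightarrow> r * m = r"
proof -
  obtain e where e: "is_projection st e" "\<And>x. e * x = x" using unit_ex by blast
  have "aw_star_algebra sc st" using ab unfolding abelian_aw_star_algebra_def by blast
  hence aw: "\<And>T::'a set. T \<noteq> {} \<Longrightarrow> \<exists>p. is_projection st p \<and> {x. \<forall>s\<in>T. s * x = 0} = {p * y | y. True}"
    unfolding aw_star_algebra_def by blast
  obtain m where m: "is_projection st m"
    "{x. \<forall>t\<in>insert 0 ((\<lambda>s. e - s) ` S). t * x = 0} = {m * y | y. True}"
    using aw[of "insert 0 ((\<lambda>s. e - s) ` S)"] by blast
  have mm: "m * m = m" using m(1) by (rule idem_proj)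
  have "m \<in> {m * y | y. True}" using mm by (intro CollectI exI[of _ m]) simp
  hence mx: "\<forall>t\<in>insert 0 ((\<lambda>s. e - s) ` S). t * m = 0" using m(2) by blast
  have 1: "\<forall>s\<in>S. m * s = m"
  proof
    fix s assume "s \<in> S"
    hence "(e - s) * m = 0" using mx by blast
    hence "s * m = m" using e(2) by (simp add: algebra_simps)
    thus "m * s = m" using comm by metis
  qed
  have 2: "r * m = r" if r: "is_projection st r" "\<forall>s\<in>S. r * s = r" for r
  proof -
    have "\<forall>t\<in>insert 0 ((\<lambda>s. e - s) ` S). t * r = 0"
    proof
      fix t assume "t \<in> insert 0 ((\<lambda>s. e - s) ` S)"
      then consider "t = 0" | s where "s \<in> S" "t = e - s" by blast
      thus "t * r = 0"
      proof cases
        case 2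
        hence "s * r = r" using r comm by metis
        moreover have "t * r = e * r - s * r" using 2 by (simp add: left_diff_distrib)
        ultimately show ?thesis using e(2) by simp
      qed simp
    qed
    hence "r \<in> {m * y | y. True}" using m(2) by blast
    then obtain y where "r = m * y" by blast
    hence "m * r = r" using mm by (simp add: mult.assoc[symmetric])
    thus ?thesis using comm by metis
  qed
  show ?thesis using that m(1) 1 2 by blast
qed

lemma inf_eq:
  assumes S: "\<forall>s\<in>S. is_projection st s" and m: "is_projection st m" "\<forall>s\<in>S. m * s = m"
    "\<forall>r. is_projection st r \<and> (\<forall>s\<in>S. r * s = r) \<longrightarrow> r * m = r"
  shows "proj_Inf st S = m"
proof -
  have glb: "is_proj_glb st S m" unfolding is_proj_glb_def
  proof (intro conjI allI impI ballI)
    show "is_projection st m" using m by blast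
    fix s assume "s \<in> S" thus "loewner_le st m s" using le_proj m S by blast
  next
    fix r assume r: "is_projection st r \<and> (\<forall>s\<in>S. loewner_le st r s)"
    hence "\<forall>s\<in>S. r * s = r" using le_proj S by blast
    thus "loewner_le st r m" using le_proj m r by blast
  qed
  have "m' = m" if g: "is_proj_glb st S m'" for m'
  proof -
    have m'p: "is_projection st m'" using g unfolding is_proj_glb_def by blast
    have "\<forall>s\<in>S. m' * s = m'" using g S m'p le_proj unfolding is_proj_glb_def by blast
    hence 1: "m' * m = m'" using m m'p by blast
    have "loewner_le st m m'" using g m glb unfolding is_proj_glb_def by blast
    hence "m * m' = m" using le_proj m m'p by blast
    thus ?thesis using 1 comm by metis
  qed
  thus ?thesis unfolding proj_Inf_def using glb by (rule the_equality[rotated])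
qed

lemma inf_props:
  assumes S: "\<forall>s\<in>S. is_projection st s"
  shows "is_projection st (proj_Inf st S)" "\<forall>s\<in>S. proj_Inf st S * s = proj_Inf st S"
    "\<forall>r. is_projection st r \<and> (\<forall>s\<in>S. r * s = r) \<longrightarrow> r * proj_Inf st S = r"
proof -
  obtain m where m: "is_projection st m" "\<forall>s\<in>S. m * s = m"
    "\<forall>r. is_projection st r \<and> (\<forall>s\<in>S. r * s = r) \<longrightarrow> r * m = r" using inf_ex[OF S] by blast
  have "proj_Inf st S = m" using inf_eq[OF S m] .
  thus "is_projection st (proj_Inf st S)" "\<forall>s\<in>S. proj_Inf st S * s = proj_Inf st S"
    "\<forall>r. is_projection st r \<and> (\<forall>s\<in>S. r * s = r) \<longrightarrow> r * proj_Inf st S = r" using m by auto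
qed

lemma sup_proj: assumes p: "is_projection st p" and q: "is_projection st q"
  shows "is_projection st (p + q - p * q)" "p * (p + q - p * q) = p" "q * (p + q - p * q) = q"
proof -
  have sp: "st p = p" and pp: "p * p = p" and sq: "st q = q" and qq: "q * q = q"
    using p q by (auto simp: is_projection_def)
  define j where "j = p + q - p * q"
  have pj: "p * j = p" unfolding j_def by (simp add: algebra_simps pp mult.assoc[symmetric])
  have qj: "q * j = q" unfolding j_def by (simp add: algebra_simps qq comm lcomm)
  have "j * j = p * j + q * j - p * (q * j)" by (simp add: j_def algebra_simps)
  hence "j * j = j" using pj qj by (simp add: j_def)
  moreover have "st j = j" unfolding j_def using sp sq by (simp add: comm)
  ultimately show "is_projection st (p + q - p * q)" unfolding is_projection_def j_def by simp
  show "p * (p + q - p * q) = p" "q * (p + q - p * q) = q" using pj qj j_def by auto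
qed

lemma sup_eq:
  assumes p: "is_projection st p" and q: "is_projection st q"
  shows "proj_sup st p q = p + q - p * q"
proof -
  define j where "j = p + q - p * q"
  have jp: "is_projection st j" "p * j = p" "q * j = q" unfolding j_def using sup_proj p q by blast+
  have pj: "p * j = p" and qj: "q * j = q" using jp by blast+
  have jr: "j * r = j" if "p * r = p" "q * r = q" for r
  proof -
    have "j * r = p * r + q * r - p * (q * r)" unfolding j_def by (simp add: algebra_simps)
    thus ?thesis using that unfolding j_def by simp
  qed
  have lub: "is_proj_lub st {p, q} j" unfolding is_proj_lub_def
  proof (intro conjI allI impI ballI)
    show "is_projection st j" using jp by blast
    fix s assume "s \<in> {p, q}"
    thus "loewner_le st s j" using le_proj jp p q pj qj by auto
  next
    fix r assume r: "is_projection st r \<and> (\<forall>s\<in>{p, q}. loewner_le st s r)"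
    hence "p * r = p" "q * r = q" using le_proj p q by auto
    thus "loewner_le st j r" using le_proj jp r jr by blast
  qed
  have "j' = j" if g: "is_proj_lub st {p, q} j'" for j'
  proof -
    have j'p: "is_projection st j'" using g unfolding is_proj_lub_def by blast
    have "p * j' = p" "q * j' = q" using g p q j'p le_proj unfolding is_proj_lub_def by auto
    hence 1: "j * j' = j" using jr by blast
    have "loewner_le st j' j" using g jp lub unfolding is_proj_lub_def by blast
    hence "j' * j = j'" using le_proj jp j'p by blast
    thus ?thesis using 1 comm by metis
  qed
  thus ?thesis unfolding proj_sup_def j_def[symmetric] using lub by (rule the_equality[rotated])
qed


lemma main:
  fixes p q :: "real \<Rightarrow> 'a" and I :: "real set"
  assumes pp: "\<forall>l\<in>I. is_projection st (p l)" and qp: "\<forall>l\<in>I. is_projection st (q l)"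
    and pm: "\<forall>l\<in>I. \<forall>m\<in>I. l \<le> m \<longrightarrow> loewner_le st (p l) (p m)"
    and qm: "\<forall>l\<in>I. \<forall>m\<in>I. l \<le> m \<longrightarrow> loewner_le st (q l) (q m)"
  shows "proj_Inf st ((\<lambda>l. proj_sup st (p l) (q l)) ` I) =
         proj_sup st (proj_Inf st (p ` I)) (proj_Inf st (q ` I))"
proof -
  obtain e where e: "is_projection st e" and ex: "\<And>x. e * x = x" using unit_ex by blast
  have xe: "x * e = x" for x using ex comm by metis
  have cp: "is_projection st (e - x)" if "is_projection st x" for x
  proof -
    have "st x = x" "x * x = x" using that by (auto simp: is_projection_def)
    moreover have "st e = e" using e by (simp add: is_projection_def)
    ultimately show ?thesis unfolding is_projection_def by (simp add: algebra_simps ex xe)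
  qed
  have zi: "x * (e - y) = 0 \<longleftrightarrow> x * y = x" for x y
  proof -
    have "x * (e - y) = x - x * y" by (simp add: right_diff_distrib xe)
    thus ?thesis by (metis right_minus_eq)
  qed
  define s where "s l = p l + q l - p l * q l" for l
  have im: "(\<lambda>l. proj_sup st (p l) (q l)) ` I = s ` I"
    using sup_eq pp qp unfolding s_def by (intro image_cong) auto
  have sp: "\<forall>l\<in>I. is_projection st (s l)" using sup_proj pp qp unfolding s_def by blast
  define P where "P = proj_Inf st (p ` I)"
  define Q where "Q = proj_Inf st (q ` I)"
  have pI: "\<forall>x\<in>p ` I. is_projection st x" using pp by blast
  have qI: "\<forall>x\<in>q ` I. is_projection st x" using qp by blast
  have Pp: "is_projection st P" and Pl: "\<And>l. l \<in> I \<Longrightarrow> P * p l = P"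
    and Pg: "\<And>r. is_projection st r \<Longrightarrow> (\<And>l. l \<in> I \<Longrightarrow> r * p l = r) \<Longrightarrow> r * P = r"
    using inf_props[OF pI] unfolding P_def by auto
  have Qp: "is_projection st Q" and Ql: "\<And>l. l \<in> I \<Longrightarrow> Q * q l = Q"
    and Qg: "\<And>r. is_projection st r \<Longrightarrow> (\<And>l. l \<in> I \<Longrightarrow> r * q l = r) \<Longrightarrow> r * Q = r"
    using inf_props[OF qI] unfolding Q_def by auto
  have pmon: "p l * p m = p l" if "l \<in> I" "m \<in> I" "l \<le> m" for l m
    using pm that le_proj pp by blast
  have qmon: "q l * q m = q l" if "l \<in> I" "m \<in> I" "l \<le> m" for l m
    using qm that le_proj qp by blast
  define J where "J = P + Q - P * Q"
  have sJ: "proj_sup st P Q = J" unfolding J_def using sup_eq Pp Qp by blast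
  have Jp: "is_projection st J" "P * J = P" "Q * J = Q" unfolding J_def using sup_proj Pp Qp by blast+
  have J1: "J * s l = J" if l: "l \<in> I" for l
  proof -
    have a: "P * s l = P"
    proof -
      have "P * s l = P * p l + P * q l - P * p l * q l" by (simp add: s_def algebra_simps)
      also have "\<dots> = P" using Pl[OF l] by simp
      finally show ?thesis .
    qed
    have b: "Q * s l = Q"
    proof -
      have "Q * s l = Q * p l + Q * q l - Q * q l * p l" by (simp add: s_def algebra_simps comm lcomm)
      also have "\<dots> = Q" using Ql[OF l] by simp
      finally show ?thesis .
    qed
    have "J * s l = P * s l + Q * s l - P * (Q * s l)" by (simp add: J_def algebra_simps)
    thus ?thesis using a b J_def by simp
  qed
  have J2: "r * J = r" if r: "is_projection st r" "\<forall>l\<in>I. r * s l = r" for r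
  proof -
    have A: "r * (e - p l) * (e - q m) = 0" if lm: "l \<in> I" "m \<in> I" for l m
    proof -
      define n where "n = min l m"
      have n: "n \<in> I" "n \<le> l" "n \<le> m" unfolding n_def using lm by (auto simp: min_def)
      have a: "(e - p n) * (e - p l) = e - p l"
      proof -
        have "(e - p n) * (e - p l) = e - p l - p n + p n * p l" by (simp add: algebra_simps ex xe)
        thus ?thesis using pmon[OF n(1) lm(1) n(2)] by simp
      qed
      have b: "(e - q n) * (e - q m) = e - q m"
      proof -
        have "(e - q n) * (e - q m) = e - q m - q n + q n * q m" by (simp add: algebra_simps ex xe)
        thus ?thesis using qmon[OF n(1) lm(2) n(3)] by simp
      qed
      have c: "r * (e - p n) * (e - q n) = r - r * s n"
        by (simp add: s_def algebra_simps ex xe)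
      have c0: "r * (e - p n) * (e - q n) = 0" using c r n by simp
      have "r * (e - p l) * (e - q m) = r * ((e - p n) * (e - p l)) * ((e - q n) * (e - q m))"
        using a b by simp
      also have "\<dots> = (r * (e - p n) * (e - q n)) * ((e - p l) * (e - q m))"
        by (simp add: mult.assoc lcomm)
      also have "\<dots> = 0" using c0 by simp
      finally show ?thesis .
    qed
    have B: "r * (e - q m) * (e - P) = 0" if m: "m \<in> I" for m
    proof -
      define X where "X = r * (e - q m)"
      have Xp: "is_projection st X" unfolding X_def using proj_mult r cp qp m by blast
      have "X * p l = X" if "l \<in> I" for l
      proof -
        have "X * (e - p l) = 0" unfolding X_def using A[OF that m] by (simp add: mult.assoc comm lcomm)
        thus ?thesis using zi by blast
      qed
      hence "X * P = X" using Pg Xp by blast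
      thus ?thesis using zi unfolding X_def by blast
    qed
    define Y where "Y = r * (e - P)"
    have Yp: "is_projection st Y" unfolding Y_def using proj_mult r cp Pp by blast
    have "Y * q m = Y" if "m \<in> I" for m
    proof -
      have "Y * (e - q m) = 0" unfolding Y_def using B[OF that] by (simp add: mult.assoc comm lcomm)
      thus ?thesis using zi by blast
    qed
    hence "Y * Q = Y" using Qg Yp by blast
    hence "Y * (e - Q) = 0" using zi by blast
    moreover have "Y * (e - Q) = r - r * J" unfolding Y_def J_def by (simp add: algebra_simps ex xe)
    ultimately show ?thesis by simp
  qed
  have "proj_Inf st (s ` I) = J"
    using inf_eq[of "s ` I" J] sp Jp(1) J1 J2 by auto
  thus ?thesis unfolding im sJ P_def[symmetric] Q_def[symmetric] .
qed

end

theorem lemma2p1: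
  fixes sc :: "complex \<Rightarrow> 'a::{real_normed_algebra,banach} \<Rightarrow> 'a"
    and st :: "'a \<Rightarrow> 'a"
    and I :: "real set"
    and p q :: "real \<Rightarrow> 'a"
  assumes "abelian_aw_star_algebra sc st"
    and "is_interval I"
    and "\<forall>l\<in>I. is_projection st (p l)"
    and "\<forall>l\<in>I. is_projection st (q l)"
    and "\<forall>l\<in>I. \<forall>m\<in>I. l \<le> m \<longrightarrow> loewner_le st (p l) (p m)"
    and "\<forall>l\<in>I. \<forall>m\<in>I. l \<le> m \<longrightarrow> loewner_le st (q l) (q m)"
  shows "proj_Inf st ((\<lambda>l. proj_sup st (p l) (q l)) ` I) =
         proj_sup st (proj_Inf st (p ` I)) (proj_Inf st (q ` I))"
proof -
  interpret acs sc st using assms(1) by unfold_locales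
  show ?thesis using main[OF assms(3-6)] .
qed

end
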